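(* Let $p\ge 1$, let $n_1,\dots,n_p\ge1$ and $k_s\in[n_s]$ for each $s$. If there exists a non-trivially intersecting family $\mathcal{F}\subseteq\prod_{s}\binom{[n_s]}{k_s}$, then there exists a non-trivially intersecting family $\mathcal{F}'\subseteq\prod_{s}\binom{[n_s]}{k_s}$ of maximum size (among all non-trivially intersecting subfamilies of $\prod_{s}\binom{[n_s]}{k_s}$) which is shifted.
   Context: Multi-part setting: the ground set is the disjoint union $\bigsqcup_{s=1}^p [n_s]$ of $p$ parts, where $[n]=\{1,\dots,n\}$. For $F_s\subseteq[n_s]$, $\bigsqcup_s F_s$ denotes the subset of the ground set having $F_s$ in part $s$; $\prod_{s}\binom{[n_s]}{k_s}$ is the collection of all sets $\bigsqcup_s F_s$ with $|F_s|=k_s$ for all $s$. A family is intersecting if any two of its sets intersect (in some part); trivially intersecting if some element (in some part) lies in all of its sets; non-trivially intersecting if intersecting but not trivially intersecting. Shifting: for $t\in[p]$, $1\le i<j\le n_t$ and $F=\bigsqcup_s F_s\in\prod_s\binom{[n_s]}{k_s}$, define $S_t^{i,j}(F)=F$ if $i\in F_t$ or $j\notin F_t$, and otherwise $S_t^{i,j}(F)$ is obtained from $F$ by replacing $F_t$ with $(F_t\setminus\{j\})\cup\{i\}$. For a family $\mathcal F\subseteq\prod_s\binom{[n_s]}{k_s}$, define $S_t^{i,j}(\mathcal F)=\{S_t^{i,j}(F):F\in\mathcal F\}\cup\{F: F\in\mathcal F \text{ and } S_t^{i,j}(F)\in\mathcal F\}$ (a $t$-shift of $\mathcal F$). $\mathcal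 F$ is $t$-shifted if $S_t^{i,j}(\mathcal F)=\mathcal F$ for all $1\le i<j\le n_t$, and shifted if it is $t$-shifted for every $t\in[p]$. *)

theory Defs
  imports Main
begin

text \<open>Ground set: disjoint union of parts [n_s], s = 1..p, encoded as pairs (s, x)
  with 1 \<le> s \<le> p and 1 \<le> x \<le> n s.\<close>

definition ground :: "nat \<Rightarrow> (nat \<Rightarrow> nat) \<Rightarrow> (nat \<times> nat) set" where
  "ground p n = {(s, x). s \<in> {1..p} \<and> x \<in> {1..n s}}"

definition part :: "(nat \<times> nat) set \<Rightarrow> nat \<Rightarrow> nat set" where
  "part F s = {x. (s, x) \<in> F}"

definition prodBinom :: "nat \<Rightarrow> (nat \<Rightarrow> nat) \<Rightarrow> (nat \<Rightarrow> nat) \<Rightarrow> (nat \<times> nat) set set" where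
  "prodBinom p n k = {F. F \<subseteq> ground p n \<and> (\<forall>s\<in>{1..p}. card (part F s) = k s)}"

definition intersecting :: "(nat \<times> nat) set set \<Rightarrow> bool" where
  "intersecting \<F> \<longleftrightarrow> (\<forall>A\<in>\<F>. \<forall>B\<in>\<F>. A \<inter> B \<noteq> {})"

definition trivially_intersecting :: "nat \<Rightarrow> (nat \<Rightarrow> nat) \<Rightarrow> (nat \<times> nat) set set \<Rightarrow> bool" where
  "trivially_intersecting p n \<F> \<longleftrightarrow> (\<exists>e\<in>ground p n. \<forall>A\<in>\<F>. e \<in> A)"

definition nontrivially_intersecting :: "nat \<Rightarrow> (nat \<Rightarrow> nat) \<Rightarrow> (nat \<times> nat) set set \<Rightarrow> bool" where
  "nontrivially_intersecting p n \<F> \<longleftrightarrow> intersecting \<F> \<and> \<not> trivially_intersecting p n \<F>"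

definition shift_set :: "nat \<Rightarrow> nat \<Rightarrow> nat \<Rightarrow> (nat \<times> nat) set \<Rightarrow> (nat \<times> nat) set" where
  "shift_set t i j F = (if i \<in> part F t \<or> j \<notin> part F t then F
                        else (F - {(t, j)}) \<union> {(t, i)})"

definition shift_family :: "nat \<Rightarrow> nat \<Rightarrow> nat \<Rightarrow> (nat \<times> nat) set set \<Rightarrow> (nat \<times> nat) set set" where
  "shift_family t i j \<F> = shift_set t i j ` \<F> \<union> {F \<in> \<F>. shift_set t i j F \<in> \<F>}"

definition t_shifted :: "(nat \<Rightarrow> nat) \<Rightarrow> nat \<Rightarrow> (nat \<times> nat) set set \<Rightarrow> bool" where
  "t_shifted n t \<F> \<longleftrightarrow> (\<forall>i j. 1 \<le> i \<and> i < j \<and> j \<le> n t \<longrightarrow> shift_family t i j \<F> = \<F>)"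

definition shifted :: "nat \<Rightarrow> (nat \<Rightarrow> nat) \<Rightarrow> (nat \<times> nat) set set \<Rightarrow> bool" where
  "shifted p n \<F> \<longleftrightarrow> (\<forall>t\<in>{1..p}. t_shifted n t \<F>)"

end

theory Submission
  imports Defs
begin
lemma part_mem[simp]: "x \<in> part F s \<longleftrightarrow> (s, x) \<in> F"
  by (simp add: part_def)
lemma ground_eq: "ground p n = Sigma {1..p} (\<lambda>s. {1..n s})"
  by (auto simp: ground_def)
lemma ground_finite: "finite (ground p n)"
  by (simp add: ground_eq)

definition wt :: "(nat \<times> nat) set \<Rightarrow> nat" where "wt A = (\<Sum>e\<in>A. snd e)"
definition Wt :: "(nat \<times> nat) set set \<Rightarrow> nat" where "Wt F = (\<Sum>A\<in>F. wt A)"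

lemma prodBinom_finite: "finite (prodBinom p n k)"
  by (rule finite_subset[of _ "Pow (ground p n)"]) (auto simp: prodBinom_def ground_finite)

lemma pB_sub: "A \<in> prodBinom p n k \<Longrightarrow> A \<subseteq> ground p n" by (simp add: prodBinom_def)
lemma pB_card: "A \<in> prodBinom p n k \<Longrightarrow> s \<in> {1..p} \<Longrightarrow> card (part A s) = k s"
  by (simp add: prodBinom_def)
lemma pB_fin: "A \<in> prodBinom p n k \<Longrightarrow> finite A"
  by (rule finite_subset[OF pB_sub ground_finite])
lemma pB_mem: "A \<in> prodBinom p n k \<Longrightarrow> (s,x) \<in> A \<Longrightarrow> s \<in> {1..p} \<and> x \<in> {1..n s}"
  using pB_sub by (fastforce simp: ground_def)
lemma part_fin: "A \<in> prodBinom p n k \<Longrightarrow> finite (part A s)"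
proof -
  assume a: "A \<in> prodBinom p n k"
  have "part A s \<subseteq> {1..n s}" using pB_mem[OF a] by auto
  thus ?thesis by (rule finite_subset) simp
qed
lemma pB_iff: "A \<in> prodBinom p n k \<longleftrightarrow> A \<subseteq> ground p n \<and> (\<forall>s\<in>{1..p}. card (part A s) = k s)"
  by (simp add: prodBinom_def)

lemma ss_cases: "shift_set t i j A = A \<or> ((t,i) \<notin> A \<and> (t,j) \<in> A \<and> shift_set t i j A = insert (t,i) (A - {(t,j)}))"
  by (auto simp: shift_set_def)

lemma ss_moved: "shift_set t i j A \<noteq> A \<Longrightarrow> (t,i) \<notin> A \<and> (t,j) \<in> A \<and> shift_set t i j A = insert (t,i) (A - {(t,j)})"
  using ss_cases by metis

lemma ss_idem: "i \<noteq> j \<Longrightarrow> shift_set t i j (shift_set t i j A) = shift_set t i j A"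
  by (auto simp: shift_set_def)

lemma ss_pB:
  assumes A: "A \<in> prodBinom p n k" and t: "t \<in> {1..p}" and i: "i \<in> {1..n t}" and ij: "i \<noteq> j"
  shows "shift_set t i j A \<in> prodBinom p n k"
proof (cases "shift_set t i j A = A")
  case True thus ?thesis using A by simp
next
  case False
  then have m: "(t,i) \<notin> A" "(t,j) \<in> A" "shift_set t i j A = insert (t,i) (A - {(t,j)})"
    using ss_moved by blast+
  have "insert (t,i) (A - {(t,j)}) \<in> prodBinom p n k"
    unfolding pB_iff
  proof
    show "insert (t,i) (A - {(t,j)}) \<subseteq> ground p n" using pB_sub[OF A] t i by (auto simp: ground_def)
    show "\<forall>s\<in>{1..p}. card (part (insert (t,i) (A - {(t,j)})) s) = k s"
    proof
      fix s assume s: "s \<in> {1..p}"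
      show "card (part (insert (t,i) (A - {(t,j)})) s) = k s"
      proof (cases "s = t")
        case True
        have e: "part (insert (t,i) (A - {(t,j)})) s = insert i (part A t - {j})"
          using True ij by (auto)
        have f: "finite (part A t)" using part_fin[OF A] .
        have "card (insert i (part A t - {j})) = card (part A t - {j}) + 1"
          using f m(1) by (simp)
        also have "\<dots> = card (part A t)" using card_Suc_Diff1[OF f, of j] m(2) by simp
        finally show ?thesis using e True pB_card[OF A s] by simp
      next
        case False
        have "part (insert (t,i) (A - {(t,j)})) s = part A s" using False by auto
        thus ?thesis using pB_card[OF A s] by simp
      qed
    qed
  qed
  thus ?thesis using m(3) by simp
qed

lemma ss_wt:
  assumes f: "finite A" and mv: "shift_set t i j A \<noteq> A"
  shows "wt (shift_set t i j A) + j = wt A + i"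
proof -
  from ss_moved[OF mv] have m: "(t,i) \<notin> A" "(t,j) \<in> A" "shift_set t i j A = insert (t,i) (A - {(t,j)})" by blast+
  have "wt (insert (t,i) (A - {(t,j)})) = i + wt (A - {(t,j)})"
    unfolding wt_def using f m(1) by (simp)
  moreover have "wt A = j + wt (A - {(t,j)})"
    unfolding wt_def using f m(2) by (simp add: sum.remove)
  ultimately show ?thesis using m(3) by simp
qed

lemma ss_inv:
  assumes mv: "shift_set t i j A \<noteq> A" "i \<noteq> j"
  shows "A = insert (t,j) (shift_set t i j A - {(t,i)})"
  using ss_moved[OF mv(1)] mv(2) by auto

lemma repl:
  assumes f: "finite F" and H: "H \<subseteq> F" and inj: "inj_on \<phi> H" and d: "\<phi> ` H \<inter> F = {}"
  shows "card ((F - H) \<union> \<phi> ` H) = card F"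
proof -
  have fH: "finite H" using finite_subset[OF H f] .
  have d2: "(F - H) \<inter> \<phi> ` H = {}" using d by blast
  have "card ((F - H) \<union> \<phi> ` H) = card (F - H) + card (\<phi> ` H)"
    using card_Un_disjoint[OF _ _ d2] f fH by simp
  also have "card (\<phi> ` H) = card H" using card_image[OF inj] .
  also have "card (F - H) + card H = card F" using card_Diff_subset[OF fH H] card_mono[OF f H] by simp
  finally show ?thesis .
qed

lemma repl_wt:
  assumes f: "finite F" and H: "H \<subseteq> F" and inj: "inj_on \<phi> H" and d: "\<phi> ` H \<inter> F = {}"
    and lt: "\<forall>A\<in>H. wt (\<phi> A) < wt A" and ne: "H \<noteq> {}"
  shows "Wt ((F - H) \<union> \<phi> ` H) < Wt F"
proof -
  have fH: "finite H" using finite_subset[OF H f] .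
  have d2: "(F - H) \<inter> \<phi> ` H = {}" using d by blast
  have "Wt ((F - H) \<union> \<phi> ` H) = Wt (F - H) + Wt (\<phi> ` H)"
    unfolding Wt_def using sum.union_disjoint[OF _ _ d2] f fH by simp
  also have "Wt (\<phi> ` H) = (\<Sum>A\<in>H. wt (\<phi> A))" unfolding Wt_def using sum.reindex[OF inj] by simp
  also have "(\<Sum>A\<in>H. wt (\<phi> A)) < (\<Sum>A\<in>H. wt A)" using sum_strict_mono[OF fH ne, of "\<lambda>A. wt (\<phi> A)" wt] lt by simp
  then have "Wt (F - H) + (\<Sum>A\<in>H. wt (\<phi> A)) < Wt (F - H) + (\<Sum>A\<in>H. wt A)" by simp
  also have "Wt (F - H) + (\<Sum>A\<in>H. wt A) = Wt F" unfolding Wt_def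
    by (simp add: sum.subset_diff[OF H f])
  finally show ?thesis .
qed

definition mvd :: "nat \<Rightarrow> nat \<Rightarrow> nat \<Rightarrow> (nat \<times> nat) set set \<Rightarrow> (nat \<times> nat) set set" where
  "mvd t i j F = {A \<in> F. shift_set t i j A \<notin> F}"

lemma sf_eq:
  assumes ij: "i \<noteq> j"
  shows "shift_family t i j F = (F - mvd t i j F) \<union> shift_set t i j ` mvd t i j F"
proof -
  let ?S = "shift_set t i j"
  show ?thesis
  proof (rule set_eqI, rule iffI)
    fix X assume "X \<in> shift_family t i j F"
    then consider (a) A where "A \<in> F" "X = ?S A" | (b) "X \<in> F" "?S X \<in> F"
      unfolding shift_family_def by blast
    then show "X \<in> (F - mvd t i j F) \<union> ?S ` mvd t i j F"
    proof cases
      case a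
      show ?thesis
      proof (cases "?S A \<in> F")
        case True
        then have "X \<notin> mvd t i j F" using a ss_idem[OF ij] by (simp add: mvd_def)
        thus ?thesis using True a by simp
      next
        case False thus ?thesis using a by (auto simp: mvd_def)
      qed
    next
      case b thus ?thesis by (auto simp: mvd_def)
    qed
  next
    fix X assume "X \<in> (F - mvd t i j F) \<union> ?S ` mvd t i j F"
    then show "X \<in> shift_family t i j F"
      unfolding shift_family_def mvd_def by auto
  qed
qed

lemma mvd_moved: "A \<in> mvd t i j F \<Longrightarrow> shift_set t i j A \<noteq> A"
  by (auto simp: mvd_def)

lemma mvd_inj: "i \<noteq> j \<Longrightarrow> inj_on (shift_set t i j) (mvd t i j F)"
proof (rule inj_onI)
  fix A B assume ij: "i \<noteq> j" and A: "A \<in> mvd t i j F" and B: "B \<in> mvd t i j F"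
    and e: "shift_set t i j A = shift_set t i j B"
  have "A = insert (t,j) (shift_set t i j A - {(t,i)})" using ss_inv[OF mvd_moved[OF A] ij] .
  also have "\<dots> = insert (t,j) (shift_set t i j B - {(t,i)})" using e by simp
  also have "\<dots> = B" using ss_inv[OF mvd_moved[OF B] ij] by simp
  finally show "A = B" .
qed

lemma sf_card: "i \<noteq> j \<Longrightarrow> finite F \<Longrightarrow> card (shift_family t i j F) = card F"
  unfolding sf_eq by (rule repl) (auto simp: mvd_inj, auto simp: mvd_def)

lemma sf_wt: "i < j \<Longrightarrow> F \<subseteq> prodBinom p n k \<Longrightarrow> finite F \<Longrightarrow> shift_family t i j F \<noteq> F \<Longrightarrow> Wt (shift_family t i j F) < Wt F"
proof -
  assume ij: "i < j" and F: "F \<subseteq> prodBinom p n k" "finite F" and ne: "shift_family t i j F \<noteq> F"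
  have "mvd t i j F \<noteq> {}" using ne sf_eq[of i j t F] ij by auto
  moreover have "\<forall>A\<in>mvd t i j F. wt (shift_set t i j A) < wt A"
  proof
    fix A assume A: "A \<in> mvd t i j F"
    have "finite A" using A F pB_fin by (auto simp: mvd_def)
    from ss_wt[OF this mvd_moved[OF A]] ij show "wt (shift_set t i j A) < wt A" by simp
  qed
  ultimately show ?thesis unfolding sf_eq[of i j, OF less_imp_neq[OF ij]]
    by (intro repl_wt) (use F ij mvd_inj in \<open>auto simp: mvd_def\<close>)
qed

lemma sf_pB: "F \<subseteq> prodBinom p n k \<Longrightarrow> t \<in> {1..p} \<Longrightarrow> i \<in> {1..n t} \<Longrightarrow> i \<noteq> j \<Longrightarrow> shift_family t i j F \<subseteq> prodBinom p n k"
  unfolding shift_family_def using ss_pB by blast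

lemma sf_inter:
  assumes I: "intersecting F" and ij: "i \<noteq> j"
  shows "intersecting (shift_family t i j F)"
proof -
  let ?S = "shift_set t i j" and ?H = "mvd t i j F"
  have key: "?S A \<inter> Y \<noteq> {}" if A: "A \<in> ?H" and Y: "Y \<in> F - ?H" for A Y
  proof -
    have AF: "A \<in> F" and m: "(t,i) \<notin> A" "(t,j) \<in> A" "?S A = insert (t,i) (A - {(t,j)})"
      using A ss_moved[OF mvd_moved[OF A]] by (auto simp: mvd_def)
    show ?thesis
    proof (cases "(t,i) \<in> Y")
      case True thus ?thesis using m by auto
    next
      case False
      show ?thesis
      proof (cases "(t,j) \<in> Y")
        case True
        then have mY: "?S Y \<noteq> Y" "?S Y = insert (t,i) (Y - {(t,j)})" using False by (auto simp: shift_set_def)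
        have "?S Y \<in> F" using Y by (auto simp: mvd_def)
        then have "A \<inter> ?S Y \<noteq> {}" using I AF unfolding intersecting_def by blast
        then obtain e where "e \<in> A" "e \<in> ?S Y" by blast
        then show ?thesis using m mY ij by auto
      next
        case False2: False
        have "A \<inter> Y \<noteq> {}" using I AF Y unfolding intersecting_def by blast
        then obtain e where "e \<in> A" "e \<in> Y" by blast
        then show ?thesis using m False2 by auto
      qed
    qed
  qed
  have key2: "?S A \<inter> ?S B \<noteq> {}" if A: "A \<in> ?H" and B: "B \<in> ?H" for A B
  proof -
    have "A \<inter> B \<noteq> {}" using A B I by (auto simp: mvd_def intersecting_def)
    then obtain e where "e \<in> A" "e \<in> B" by blast
    then show ?thesis using ss_moved[OF mvd_moved[OF A]] ss_moved[OF mvd_moved[OF B]] by auto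
  qed
  show ?thesis unfolding intersecting_def sf_eq[OF ij]
  proof (intro ballI)
    fix X Y assume X: "X \<in> (F - ?H) \<union> ?S ` ?H" and Y: "Y \<in> (F - ?H) \<union> ?S ` ?H"
    show "X \<inter> Y \<noteq> {}"
      using X Y
    proof (elim UnE)
      assume "X \<in> F - ?H" "Y \<in> F - ?H" thus ?thesis using I by (auto simp: intersecting_def)
    next
      assume "X \<in> F - ?H" "Y \<in> ?S ` ?H" thus ?thesis using key by (auto simp: Int_commute)
    next
      assume "X \<in> ?S ` ?H" "Y \<in> F - ?H" thus ?thesis using key by auto
    next
      assume "X \<in> ?S ` ?H" "Y \<in> ?S ` ?H" thus ?thesis using key2 by auto
    qed
  qed
qed

lemma sf_center:
  assumes ij: "i \<noteq> j" and A: "A \<in> F" "e \<notin> A" and all: "\<forall>B\<in>shift_family t i j F. e \<in> B"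
  shows "e = (t,i)"
proof (cases "A \<in> mvd t i j F")
  case True
  then have "shift_set t i j A \<in> shift_family t i j F" unfolding sf_eq[OF ij] by auto
  then have "e \<in> shift_set t i j A" using all by blast
  thus ?thesis using ss_moved[OF mvd_moved[OF True]] A by auto
next
  case False
  then have "A \<in> shift_family t i j F" unfolding sf_eq[OF ij] using A by auto
  thus ?thesis using all A by blast
qed

lemma sf_fixed: "shift_family t i j F = F \<Longrightarrow> A \<in> F \<Longrightarrow> shift_set t i j A \<in> F"
  unfolding shift_family_def by blast


lemma exX:
  assumes A: "\<forall>s\<in>{1..p}. I s \<subseteq> E s \<and> E s \<subseteq> {1..n s} \<and> card (I s) \<le> k s \<and> k s \<le> card (E s)"
  shows "\<exists>X\<in>prodBinom p n k. \<forall>s\<in>{1..p}. I s \<subseteq> part X s \<and> part X s \<subseteq> E s"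
proof -
  have "\<forall>s\<in>{1..p}. \<exists>Y. I s \<subseteq> Y \<and> Y \<subseteq> E s \<and> card Y = k s"
  proof
    fix s assume s: "s \<in> {1..p}"
    have a: "I s \<subseteq> E s" "E s \<subseteq> {1..n s}" "card (I s) \<le> k s" "k s \<le> card (E s)" using A s by auto
    have fE: "finite (E s)" using finite_subset[OF a(2)] by simp
    have fI: "finite (I s)" using finite_subset[OF a(1) fE] .
    have "card (E s - I s) = card (E s) - card (I s)" using card_Diff_subset[OF fI a(1)] .
    then have "k s - card (I s) \<le> card (E s - I s)" using a by simp
    then obtain Z where Z: "Z \<subseteq> E s - I s" "card Z = k s - card (I s)" "finite Z"
      by (rule obtain_subset_with_card_n)
    have d: "I s \<inter> Z = {}" using Z by blast
    have "card (I s \<union> Z) = card (I s) + card Z" using card_Un_disjoint[OF fI Z(3) d] .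
    also have "\<dots> = k s" using Z(2) a(3) by simp
    finally show "\<exists>Y. I s \<subseteq> Y \<and> Y \<subseteq> E s \<and> card Y = k s"
      using Z(1) a(1) by (intro exI[of _ "I s \<union> Z"]) auto
  qed
  then obtain Y where Y: "\<forall>s\<in>{1..p}. I s \<subseteq> Y s \<and> Y s \<subseteq> E s \<and> card (Y s) = k s"
    using bchoice[of "{1..p}" "\<lambda>s Y. I s \<subseteq> Y \<and> Y \<subseteq> E s \<and> card Y = k s"] by blast
  define X where "X = {(s,x). s \<in> {1..p} \<and> x \<in> Y s}"
  have pX: "part X s = Y s" if "s \<in> {1..p}" for s using that by (auto simp: X_def part_def)
  have "X \<subseteq> ground p n"
  proof
    fix e assume "e \<in> X"
    then obtain s x where e: "e = (s,x)" "s \<in> {1..p}" "x \<in> Y s" by (auto simp: X_def)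
    have "x \<in> {1..n s}" using Y A e by blast
    thus "e \<in> ground p n" using e by (simp add: ground_def)
  qed
  then have XP: "X \<in> prodBinom p n k" using Y pX by (simp add: pB_iff)
  have "\<forall>s\<in>{1..p}. I s \<subseteq> part X s \<and> part X s \<subseteq> E s" using Y pX by simp
  thus ?thesis using XP by blast
qed

lemma wt_swap:
  assumes f: "finite A" and a: "(s,a) \<in> A" and b: "(s,b) \<notin> A"
  shows "wt (insert (s,b) (A - {(s,a)})) + a = wt A + b"
proof -
  have "wt (insert (s,b) (A - {(s,a)})) = b + wt (A - {(s,a)})"
    unfolding wt_def using f b by simp
  moreover have "wt A = a + wt (A - {(s,a)})"
    unfolding wt_def using f a by (simp add: sum.remove)
  ultimately show ?thesis by simp
qed

lemma ex_min_wt: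
  assumes "finite C" "C \<noteq> {}"
  shows "\<exists>A\<in>C. \<forall>A'\<in>C. wt A \<le> wt A'"
proof -
  have "Min (wt ` C) \<in> wt ` C" using assms by simp
  then obtain A where A: "A \<in> C" "wt A = Min (wt ` C)" by auto
  have "\<forall>A'\<in>C. wt A \<le> wt A'" using A assms by simp
  thus ?thesis using A by blast
qed

lemma minpair:
  fixes CA CB :: "(nat \<times> nat) set set"
  assumes fA: "finite CA" and fB: "finite CB" and nA: "CA \<noteq> {}" and nB: "CB \<noteq> {}"
    and fin: "\<And>A. A \<in> CA \<union> CB \<Longrightarrow> finite A"
    and H: "\<And>A B. A \<in> CA \<Longrightarrow> B \<in> CB \<Longrightarrow> \<exists>s a b. (s,a) \<in> A \<and> (s,a) \<notin> B \<and> (s,b) \<in> B \<and> (s,b) \<notin> A \<and>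
              (b < a \<longrightarrow> insert (s,b) (A - {(s,a)}) \<in> CA) \<and> (a < b \<longrightarrow> insert (s,a) (B - {(s,b)}) \<in> CB)"
  shows False
proof -
  obtain A where A: "A \<in> CA" "\<forall>A'\<in>CA. wt A \<le> wt A'" using ex_min_wt[OF fA nA] by blast
  obtain B where B: "B \<in> CB" "\<forall>B'\<in>CB. wt B \<le> wt B'" using ex_min_wt[OF fB nB] by blast
  obtain s a b where h: "(s,a) \<in> A" "(s,a) \<notin> B" "(s,b) \<in> B" "(s,b) \<notin> A"
    "b < a \<longrightarrow> insert (s,b) (A - {(s,a)}) \<in> CA" "a < b \<longrightarrow> insert (s,a) (B - {(s,b)}) \<in> CB"
    using H[OF A(1) B(1)] by blast
  have ab: "a \<noteq> b" using h by blast
  show False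
  proof (cases "b < a")
    case True
    have "wt (insert (s,b) (A - {(s,a)})) + a = wt A + b" using wt_swap[OF fin h(1) h(4)] A(1) by simp
    moreover have "wt A \<le> wt (insert (s,b) (A - {(s,a)}))" using A(2) h(5) True by blast
    ultimately show False using True by simp
  next
    case False
    then have lt: "a < b" using ab by simp
    have "wt (insert (s,a) (B - {(s,b)})) + b = wt B + a" using wt_swap[OF fin h(3) h(2)] B(1) by simp
    moreover have "wt B \<le> wt (insert (s,a) (B - {(s,b)}))" using B(2) h(6) lt by blast
    ultimately show False using lt by simp
  qed
qed

lemma diff_elems:
  assumes "finite X" "finite Y" "card X = card Y" "X \<noteq> Y"
  shows "\<exists>a\<in>X - Y. \<exists>b\<in>Y - X. True"
proof -
  have "\<not> X \<subseteq> Y" using assms card_subset_eq by blast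
  moreover have "\<not> Y \<subseteq> X" using assms card_subset_eq by metis
  ultimately show ?thesis by blast
qed



locale mf =
  fixes p :: nat and n k :: "nat \<Rightarrow> nat" and F :: "(nat \<times> nat) set set"
  assumes p1: "p \<ge> 1"
    and kn: "\<forall>s\<in>{1..p}. k s \<in> {1..n s}"
    and Fsub: "F \<subseteq> prodBinom p n k" and Fnt: "nontrivially_intersecting p n F"
    and Fmax: "\<And>G. G \<subseteq> prodBinom p n k \<Longrightarrow> nontrivially_intersecting p n G \<Longrightarrow> card G \<le> card F"
    and Fmin: "\<And>G. G \<subseteq> prodBinom p n k \<Longrightarrow> nontrivially_intersecting p n G \<Longrightarrow> card G = card F \<Longrightarrow> Wt F \<le> Wt G"
begin

lemma Ffin: "finite F" using finite_subset[OF Fsub prodBinom_finite] .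
lemma Finter: "intersecting F" using Fnt by (simp add: nontrivially_intersecting_def)
lemma Favoid: "e \<in> ground p n \<Longrightarrow> \<exists>A\<in>F. e \<notin> A"
  using Fnt by (auto simp: nontrivially_intersecting_def trivially_intersecting_def)
lemma FpB: "A \<in> F \<Longrightarrow> A \<in> prodBinom p n k" using Fsub by blast
lemma Fpart: "A \<in> F \<Longrightarrow> s \<in> {1..p} \<Longrightarrow> card (part A s) = k s" by (rule pB_card[OF FpB])
lemma Fmem: "A \<in> F \<Longrightarrow> (s,x) \<in> A \<Longrightarrow> s \<in> {1..p} \<and> x \<in> {1..n s}" by (rule pB_mem[OF FpB])
lemma Ffin1: "A \<in> F \<Longrightarrow> finite A" by (rule pB_fin[OF FpB])
lemma Fmeet: "A \<in> F \<Longrightarrow> B \<in> F \<Longrightarrow> A \<inter> B \<noteq> {}" using Finter by (simp add: intersecting_def)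

lemma kn1: "s \<in> {1..p} \<Longrightarrow> 1 \<le> k s \<and> k s \<le> n s" using kn by auto

lemma ground_11: "(1,1) \<in> ground p n"
  using p1 kn1[of 1] by (auto simp: ground_def)

lemma Fne: "F \<noteq> {}" using Favoid[OF ground_11] by blast

lemma klt: assumes s: "s \<in> {1..p}" shows "k s < n s"
proof (rule ccontr)
  assume "\<not> k s < n s"
  then have ks: "k s = n s" using kn1[OF s] by auto
  have g: "(s,1) \<in> ground p n" using kn1[OF s] s by (auto simp: ground_def)
  obtain A where A: "A \<in> F" "(s,1) \<notin> A" using Favoid[OF g] by blast
  have sub: "part A s \<subseteq> {1..n s}" using Fmem[OF A(1)] by auto
  have "card (part A s) = card {1..n s}" using Fpart[OF A(1) s] ks by simp
  then have "part A s = {1..n s}" using card_subset_eq[OF _ sub] by simp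
  then have "(s,1) \<in> A" using kn1[OF s] by auto
  thus False using A by simp
qed

lemma full:
  assumes X: "X \<in> prodBinom p n k" and m: "\<forall>A\<in>F. X \<inter> A \<noteq> {}"
  shows "X \<in> F"
proof (rule ccontr)
  assume nX: "X \<notin> F"
  let ?G = "insert X F"
  have "X \<noteq> {}" using m Fne by blast
  have "intersecting ?G" using m Finter \<open>X \<noteq> {}\<close> unfolding intersecting_def by (auto simp: Int_commute)
  moreover have "\<not> trivially_intersecting p n ?G"
    using Favoid unfolding trivially_intersecting_def by blast
  ultimately have "card ?G \<le> card F" using Fmax[of ?G] X Fsub by (simp add: nontrivially_intersecting_def)
  thus False using nX Ffin by simp
qed

lemma better:
  assumes G: "G \<subseteq> prodBinom p n k" "intersecting G" "card G = card F" "Wt G < Wt F"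
  shows "\<exists>e\<in>ground p n. \<forall>A\<in>G. e \<in> A"
proof (rule ccontr)
  assume "\<not> ?thesis"
  then have "nontrivially_intersecting p n G" using G
    by (simp add: nontrivially_intersecting_def trivially_intersecting_def)
  then have "Wt F \<le> Wt G" using Fmin[OF G(1) _ G(3)] by simp
  thus False using G by simp
qed

lemma deg:
  assumes t: "t \<in> {1..p}" and ij: "1 \<le> i" "i < j" "j \<le> n t" and ch: "shift_family t i j F \<noteq> F"
  shows "\<forall>B\<in>shift_family t i j F. (t,i) \<in> B"
proof -
  let ?G = "shift_family t i j F"
  have G: "?G \<subseteq> prodBinom p n k" using sf_pB[OF Fsub t] ij by simp
  have "intersecting ?G" using sf_inter[OF Finter] ij by simp
  moreover have "card ?G = card F" using sf_card Ffin ij by simp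
  moreover have "Wt ?G < Wt F" using sf_wt[OF ij(2) Fsub Ffin ch] .
  ultimately obtain e where e: "e \<in> ground p n" "\<forall>A\<in>?G. e \<in> A" using better G by blast
  obtain A where A: "A \<in> F" "e \<notin> A" using Favoid[OF e(1)] by blast
  have "e = (t,i)" using sf_center[OF _ A e(2)] ij by simp
  thus ?thesis using e by simp
qed

lemma degA:
  assumes t: "t \<in> {1..p}" and ij: "1 \<le> i" "i < j" "j \<le> n t" and ch: "shift_family t i j F \<noteq> F"
    and A: "A \<in> F"
  shows "(t,i) \<in> A \<or> (t,j) \<in> A"
proof (rule ccontr)
  assume na: "\<not> ((t,i) \<in> A \<or> (t,j) \<in> A)"
  then have "shift_set t i j A = A" by (auto simp: shift_set_def)
  then have "A \<in> shift_family t i j F" using A by (auto simp: shift_family_def)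
  thus False using deg[OF t ij ch] na by blast
qed

lemma degB:
  assumes t: "t \<in> {1..p}" and ij: "1 \<le> i" "i < j" "j \<le> n t" and ch: "shift_family t i j F \<noteq> F"
    and A: "A \<in> F" "(t,j) \<in> A" "(t,i) \<notin> A"
  shows "insert (t,i) (A - {(t,j)}) \<notin> F"
proof
  assume a: "insert (t,i) (A - {(t,j)}) \<in> F"
  have "shift_set t i j A = insert (t,i) (A - {(t,j)})" using A by (auto simp: shift_set_def)
  then have "A \<in> shift_family t i j F" using A a by (auto simp: shift_family_def)
  thus False using deg[OF t ij ch] A by blast
qed

lemma exmoved:
  assumes ch: "shift_family t i j F \<noteq> F" and ij: "i \<noteq> j"
  shows "\<exists>B\<in>F. (t,j) \<in> B \<and> (t,i) \<notin> B"
proof -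
  have "mvd t i j F \<noteq> {}" using ch sf_eq[OF ij, of t F] by auto
  then obtain B where "B \<in> mvd t i j F" by blast
  thus ?thesis using ss_moved[OF mvd_moved[OF \<open>B \<in> mvd t i j F\<close>]] by (auto simp: mvd_def)
qed

end


lemma part_single: "part A t = {c} \<Longrightarrow> (t,x) \<in> A \<longleftrightarrow> x = c"
proof -
  assume a: "part A t = {c}"
  have "x \<in> part A t \<longleftrightarrow> x = c" using a by simp
  thus ?thesis by simp
qed

context mf begin

lemma disj_fix:
  assumes t: "t \<in> {1..p}" and ij: "1 \<le> i" "i < j" "j \<le> n t" and ch: "shift_family t i j F \<noteq> F"
    and k2: "2 \<le> k t"
    and s: "s \<in> {1..p}" and xy: "1 \<le> x" "x < y" "y \<le> n s"
    and dx: "(s,x) \<noteq> (t,i)" "(s,x) \<noteq> (t,j)" and dy: "(s,y) \<noteq> (t,i)" "(s,y) \<noteq> (t,j)"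
  shows "shift_family s x y F = F"
proof (rule ccontr)
  assume ch2: "shift_family s x y F \<noteq> F"
  have st: "\<forall>B\<in>shift_family s x y F. (s,x) \<in> B" using deg[OF s xy ch2] .
  define I where "I = (\<lambda>s'. if s' = t then {i,j} else ({}::nat set))"
  define E where "E = (\<lambda>s'. if s' = s then {1..n s'} - {x} else {1..n s'})"
  have cond: "\<forall>s'\<in>{1..p}. I s' \<subseteq> E s' \<and> E s' \<subseteq> {1..n s'} \<and> card (I s') \<le> k s' \<and> k s' \<le> card (E s')"
  proof
    fix s' assume s': "s' \<in> {1..p}"
    have kk: "k s' < n s'" using klt[OF s'] .
    have cE: "card (E s') \<ge> n s' - 1"
    proof (cases "s' = s")
      case True
      have "x \<in> {1..n s'}" using xy True by simp
      then have "card ({1..n s'} - {x}) = n s' - 1" by (simp add: card_Diff_singleton)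
      thus ?thesis using True by (simp add: E_def)
    next
      case False thus ?thesis by (simp add: E_def)
    qed
    have cI: "card (I s') \<le> k s'"
    proof (cases "s' = t")
      case True
      have "card {i,j} \<le> 2" by (simp add: card_insert_if)
      thus ?thesis using True k2 by (simp add: I_def)
    next
      case False thus ?thesis by (simp add: I_def)
    qed
    have sub: "I s' \<subseteq> E s'"
    proof (cases "s' = t")
      case True
      have "i \<in> {1..n t}" "j \<in> {1..n t}" using ij by auto
      moreover have "s = t \<Longrightarrow> x \<noteq> i \<and> x \<noteq> j" using dx by auto
      ultimately show ?thesis using True by (auto simp: I_def E_def)
    next
      case False thus ?thesis by (simp add: I_def)
    qed
    show "I s' \<subseteq> E s' \<and> E s' \<subseteq> {1..n s'} \<and> card (I s') \<le> k s' \<and> k s' \<le> card (E s')"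
      using sub cI cE kk by (auto simp: E_def)
  qed
  obtain X where X: "X \<in> prodBinom p n k" "\<forall>s'\<in>{1..p}. I s' \<subseteq> part X s' \<and> part X s' \<subseteq> E s'"
    using exX[OF cond] by blast
  have "I t \<subseteq> part X t" using X(2) t by blast
  then have Xt: "(t,i) \<in> X" "(t,j) \<in> X" by (auto simp: I_def)
  have Xs: "(s,x) \<notin> X"
  proof
    assume "(s,x) \<in> X"
    then have "x \<in> part X s" by simp
    then have "x \<in> E s" using X(2) s by blast
    thus False by (simp add: E_def)
  qed
  have XF: "X \<in> F"
    using full[OF X(1)] degA[OF t ij ch] Xt by blast
  have "shift_set s x y X \<in> prodBinom p n k" using ss_pB[OF X(1) s] xy by simp
  moreover have "(t,i) \<in> shift_set s x y X" "(t,j) \<in> shift_set s x y X"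
    using Xt dy by (auto simp: shift_set_def)
  ultimately have "shift_set s x y X \<in> F"
    using full degA[OF t ij ch] by blast
  then have "X \<in> shift_family s x y F" using XF by (auto simp: shift_family_def)
  thus False using st Xs by blast
qed

lemma kt_one:
  assumes t: "t \<in> {1..p}" and ij: "1 \<le> i" "i < j" "j \<le> n t" and ch: "shift_family t i j F \<noteq> F"
  shows "k t = 1"
proof (rule ccontr)
  assume "k t \<noteq> 1" then have k2: "2 \<le> k t" using kn1[OF t] by simp
  define CA where "CA = {A \<in> F. (t,i) \<in> A \<and> (t,j) \<notin> A}"
  define CB where "CB = {B \<in> F. (t,j) \<in> B \<and> (t,i) \<notin> B}"
  have fCA: "finite CA" using Ffin by (simp add: CA_def)
  have fCB: "finite CB" using Ffin by (simp add: CB_def)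
  have gj: "(t,j) \<in> ground p n" using t ij by (simp add: ground_def)
  obtain A1 where "A1 \<in> F" "(t,j) \<notin> A1" using Favoid[OF gj] by blast
  then have "A1 \<in> CA" using degA[OF t ij ch] by (auto simp: CA_def)
  then have nA: "CA \<noteq> {}" by blast
  have nB: "CB \<noteq> {}" using exmoved[OF ch] ij by (auto simp: CB_def)
  show False
  proof (rule minpair[OF fCA fCB nA nB])
    show "\<And>A. A \<in> CA \<union> CB \<Longrightarrow> finite A" using Ffin1 by (auto simp: CA_def CB_def)
  next
    fix A B assume A: "A \<in> CA" and B: "B \<in> CB"
    have AF: "A \<in> F" "(t,i) \<in> A" "(t,j) \<notin> A" using A by (auto simp: CA_def)
    have BF: "B \<in> F" "(t,j) \<in> B" "(t,i) \<notin> B" using B by (auto simp: CB_def)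
    define A0 where "A0 = A - {(t,i)}"
    define B0 where "B0 = B - {(t,j)}"
    have "A0 \<noteq> B0"
    proof
      assume e: "A0 = B0"
      have "insert (t,i) (B - {(t,j)}) = A" using e AF(2) unfolding A0_def B0_def by auto
      thus False using degB[OF t ij ch BF] AF(1) by simp
    qed
    have "\<exists>s. part A0 s \<noteq> part B0 s"
    proof (rule ccontr)
      assume "\<not> (\<exists>s. part A0 s \<noteq> part B0 s)"
      then have eqp: "\<And>s. part A0 s = part B0 s" by blast
      have "\<And>s x. (s,x) \<in> A0 \<longleftrightarrow> (s,x) \<in> B0"
      proof -
        fix s x
        have "x \<in> part A0 s \<longleftrightarrow> x \<in> part B0 s" using eqp by simp
        thus "(s,x) \<in> A0 \<longleftrightarrow> (s,x) \<in> B0" by simp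
      qed
      then have "A0 = B0" by (simp add: set_eq_iff)
      thus False using \<open>A0 \<noteq> B0\<close> by simp
    qed
    then obtain s where ps: "part A0 s \<noteq> part B0 s" by blast
    have s: "s \<in> {1..p}"
    proof (rule ccontr)
      assume ns: "s \<notin> {1..p}"
      have "part A0 s = {}" using Fmem[OF AF(1)] ns by (auto simp: A0_def)
      moreover have "part B0 s = {}" using Fmem[OF BF(1)] ns by (auto simp: B0_def)
      ultimately show False using ps by simp
    qed
    have pA: "part A0 s = (if s = t then part A s - {i} else part A s)" by (auto simp: A0_def)
    have pB: "part B0 s = (if s = t then part B s - {j} else part B s)" by (auto simp: B0_def)
    have fA: "finite (part A s)" using part_fin[OF FpB[OF AF(1)]] .
    have fB: "finite (part B s)" using part_fin[OF FpB[OF BF(1)]] .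
    have cA: "card (part A s) = k s" using Fpart[OF AF(1) s] .
    have cB: "card (part B s) = k s" using Fpart[OF BF(1) s] .
    have "card (part A0 s) = card (part B0 s)"
    proof (cases "s = t")
      case True
      have "card (part A s - {i}) = k s - 1" using cA AF(2) True by (simp add: card_Diff_singleton)
      moreover have "card (part B s - {j}) = k s - 1" using cB BF(2) True by (simp add: card_Diff_singleton)
      ultimately show ?thesis using pA pB True by simp
    next
      case False thus ?thesis using pA pB cA cB by simp
    qed
    moreover have "finite (part A0 s)" "finite (part B0 s)" using pA pB fA fB by auto
    ultimately obtain a b where ab: "a \<in> part A0 s - part B0 s" "b \<in> part B0 s - part A0 s"
      using diff_elems[OF _ _ _ ps] by blast
    have a0: "(s,a) \<in> A0" "(s,a) \<notin> B0" using ab by simp_all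
    have b0: "(s,b) \<in> B0" "(s,b) \<notin> A0" using ab by simp_all
    have a1: "(s,a) \<in> A" "(s,a) \<noteq> (t,i)" using a0 unfolding A0_def by blast+
    have b1: "(s,b) \<in> B" "(s,b) \<noteq> (t,j)" using b0 unfolding B0_def by blast+
    have a2: "(s,a) \<noteq> (t,j)" using a1(1) AF(3) by metis
    have b2: "(s,b) \<noteq> (t,i)" using b1(1) BF(3) by metis
    have a3: "(s,a) \<notin> B" using a0(2) a2 unfolding B0_def by blast
    have b3: "(s,b) \<notin> A" using b0(2) b2 unfolding A0_def by blast
    have ra: "1 \<le> a" "a \<le> n s" using Fmem[OF AF(1) a1(1)] by simp_all
    have rb: "1 \<le> b" "b \<le> n s" using Fmem[OF BF(1) b1(1)] by simp_all
    have c1: "insert (s,b) (A - {(s,a)}) \<in> CA" if ba: "b < a"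
    proof -
      have "shift_family s b a F = F"
        using disj_fix[OF t ij ch k2 s rb(1) ba ra(2) b2 b1(2) a1(2) a2] .
      then have "shift_set s b a A \<in> F" using sf_fixed AF(1) by blast
      moreover have "shift_set s b a A = insert (s,b) (A - {(s,a)})" using a1(1) b3 by (simp add: shift_set_def)
      ultimately show ?thesis using AF a1 b2 b1 by (auto simp: CA_def)
    qed
    have c2: "insert (s,a) (B - {(s,b)}) \<in> CB" if ab': "a < b"
    proof -
      have "shift_family s a b F = F"
        using disj_fix[OF t ij ch k2 s ra(1) ab' rb(2) a1(2) a2 b2 b1(2)] .
      then have "shift_set s a b B \<in> F" using sf_fixed BF(1) by blast
      moreover have "shift_set s a b B = insert (s,a) (B - {(s,b)})" using b1(1) a3 by (simp add: shift_set_def)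
      ultimately show ?thesis using BF a1 a2 b1 by (auto simp: CB_def)
    qed
    show "\<exists>s a b. (s,a) \<in> A \<and> (s,a) \<notin> B \<and> (s,b) \<in> B \<and> (s,b) \<notin> A \<and>
              (b < a \<longrightarrow> insert (s,b) (A - {(s,a)}) \<in> CA) \<and> (a < b \<longrightarrow> insert (s,a) (B - {(s,b)}) \<in> CB)"
      using a1(1) a3 b1(1) b3 c1 c2 by blast
  qed
qed

end

context mf begin

lemma bin:
  assumes t: "t \<in> {1..p}" and ij: "1 \<le> i" "i < j" "j \<le> n t" and ch: "shift_family t i j F \<noteq> F"
    and A: "A \<in> F"
  shows "part A t = {i} \<or> part A t = {j}"
proof -
  have "card (part A t) = 1" using Fpart[OF A t] kt_one[OF t ij ch] by simp
  then obtain z where z: "part A t = {z}" using card_1_singletonE by blast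
  have "(t,i) \<in> A \<or> (t,j) \<in> A" using degA[OF t ij ch A] .
  then have "i \<in> part A t \<or> j \<in> part A t" by simp
  then have "z = i \<or> z = j" using z by auto
  thus ?thesis using z by blast
qed

lemma ij12:
  assumes t: "t \<in> {1..p}" and ij: "1 \<le> i" "i < j" "j \<le> n t" and ch: "shift_family t i j F \<noteq> F"
  shows "i = 1 \<and> j = 2"
proof -
  have gj: "(t,j) \<in> ground p n" using t ij by (simp add: ground_def)
  obtain A where A: "A \<in> F" "(t,j) \<notin> A" using Favoid[OF gj] by blast
  have "j \<notin> part A t" using A(2) by simp
  then have "part A t \<noteq> {j}" by (metis singletonI)
  then have pA: "part A t = {i}" using bin[OF t ij ch A(1)] by blast
  obtain B where B: "B \<in> F" "(t,j) \<in> B" "(t,i) \<notin> B" using exmoved[OF ch] ij by auto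
  have "i \<notin> part B t" using B(3) by simp
  then have "part B t \<noteq> {i}" by (metis singletonI)
  then have pB: "part B t = {j}" using bin[OF t ij ch B(1)] by blast
  have notF: "X \<notin> F" if "part X t = {c}" "c \<noteq> i" "c \<noteq> j" for X c
  proof
    assume "X \<in> F"
    then have "part X t = {i} \<or> part X t = {j}" by (rule bin[OF t ij ch])
    thus False using that by auto
  qed
  have i1: "i = 1"
  proof (rule ccontr)
    assume "i \<noteq> 1" then have i: "1 < i" using ij by simp
    let ?S = "shift_set t 1 i"
    have A1: "(t,1) \<notin> A" "(t,i) \<in> A" using part_single[OF pA] i by auto
    have SA: "?S A = insert (t,1) (A - {(t,i)})" using A1 by (simp add: shift_set_def)
    have "part (?S A) t = {1}" unfolding SA using part_single[OF pA] by auto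
    then have "?S A \<notin> F" using notF i ij by simp
    moreover have "?S A \<in> shift_family t 1 i F" using A(1) by (auto simp: shift_family_def)
    ultimately have ch2: "shift_family t 1 i F \<noteq> F" by blast
    have st: "\<forall>X\<in>shift_family t 1 i F. (t,1) \<in> X" using deg[OF t _ i _ ch2] ij by simp
    have "?S B = B" using B(3) by (simp add: shift_set_def)
    then have "B \<in> shift_family t 1 i F" using B(1) by (auto simp: shift_family_def)
    moreover have "(t,1) \<notin> B" using part_single[OF pB] ij i by auto
    ultimately show False using st by blast
  qed
  have j2: "j = 2"
  proof (rule ccontr)
    assume "j \<noteq> 2" then have j: "2 < j" using ij i1 by simp
    let ?S = "shift_set t 2 j"
    have B1: "(t,2) \<notin> B" "(t,j) \<in> B" using part_single[OF pB] j by auto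
    have SB: "?S B = insert (t,2) (B - {(t,j)})" using B1 by (simp add: shift_set_def)
    have "part (?S B) t = {2}" unfolding SB using part_single[OF pB] by auto
    then have "?S B \<notin> F" using notF j i1 by simp
    moreover have "?S B \<in> shift_family t 2 j F" using B(1) by (auto simp: shift_family_def)
    ultimately have ch2: "shift_family t 2 j F \<noteq> F" by blast
    have st: "\<forall>X\<in>shift_family t 2 j F. (t,2) \<in> X" using deg[OF t _ j _ ch2] ij by simp
    have "?S A = A" using A(2) by (simp add: shift_set_def)
    then have "A \<in> shift_family t 2 j F" using A(1) by (auto simp: shift_family_def)
    moreover have "(t,2) \<notin> A" using part_single[OF pA] i1 by auto
    ultimately show False using st by blast
  qed
  show ?thesis using i1 j2 by simp
qed

end

lemma bin_mem:
  assumes c: "part A t = {1} \<or> part A t = {2}"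
  shows "((t,2) \<in> A \<longleftrightarrow> (t,1) \<notin> A)" "((t,x) \<in> A \<longrightarrow> x = 1 \<or> x = 2)"
    "(t,1) \<in> A \<Longrightarrow> part A t = {1}" "(t,1) \<notin> A \<Longrightarrow> part A t = {2}"
proof -
  have "((t,2) \<in> A \<longleftrightarrow> (t,1) \<notin> A) \<and> ((t,x) \<in> A \<longrightarrow> x = 1 \<or> x = 2) \<and> ((t,1) \<in> A \<longrightarrow> part A t = {1})
     \<and> ((t,1) \<notin> A \<longrightarrow> part A t = {2})"
  proof (cases "part A t = {1}")
    case True then show ?thesis using part_single[OF True] by simp
  next
    case False then have e: "part A t = {2}" using c by simp
    then show ?thesis using part_single[OF e] by simp
  qed
  thus "((t,2) \<in> A \<longleftrightarrow> (t,1) \<notin> A)" "((t,x) \<in> A \<longrightarrow> x = 1 \<or> x = 2)"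
    "(t,1) \<in> A \<Longrightarrow> part A t = {1}" "(t,1) \<notin> A \<Longrightarrow> part A t = {2}" by blast+
qed

context mf begin

definition TT :: "nat set" where "TT = {t \<in> {1..p}. 2 \<le> n t \<and> shift_family t 1 2 F \<noteq> F}"

lemma TT_sub: "TT \<subseteq> {1..p}" by (auto simp: TT_def)
lemma TT_fin: "finite TT" using finite_subset[OF TT_sub] by simp

lemma TT_props: assumes t: "t \<in> TT"
  shows "t \<in> {1..p}" "2 \<le> n t" "shift_family t 1 2 F \<noteq> F" "k t = 1"
proof -
  show t1: "t \<in> {1..p}" "2 \<le> n t" and ch: "shift_family t 1 2 F \<noteq> F" using t by (auto simp: TT_def)
  show "k t = 1" using kt_one[OF t1(1) _ _ t1(2) ch] by simp
qed

lemma TT_bin: "t \<in> TT \<Longrightarrow> A \<in> F \<Longrightarrow> part A t = {1} \<or> part A t = {2}"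
  using bin[OF TT_props(1) _ _ TT_props(2) TT_props(3)] by simp

lemma TT_mem: assumes t: "t \<in> TT" and A: "A \<in> F"
  shows "(t,2) \<in> A \<longleftrightarrow> (t,1) \<notin> A" and "(t,x) \<in> A \<Longrightarrow> x = 1 \<or> x = 2"
    and "(t,1) \<in> A \<Longrightarrow> part A t = {1}" and "(t,1) \<notin> A \<Longrightarrow> part A t = {2}"
  using bin_mem[OF TT_bin[OF t A]] by blast+

lemma TT_deg: assumes t: "t \<in> TT" and A: "A \<in> F" "(t,2) \<in> A"
  shows "insert (t,1) (A - {(t,2)}) \<notin> F"
proof -
  have "(t,1) \<notin> A" using TT_mem(1)[OF t A(1)] A(2) by simp
  thus ?thesis using degB[OF TT_props(1)[OF t] _ _ TT_props(2)[OF t] TT_props(3)[OF t] A] by simp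
qed

lemma fix_other: assumes s: "s \<in> {1..p}" "s \<notin> TT" and xy: "1 \<le> x" "x < y" "y \<le> n s"
  shows "shift_family s x y F = F"
proof (rule ccontr)
  assume ch: "shift_family s x y F \<noteq> F"
  have "x = 1 \<and> y = 2" using ij12[OF s(1) xy ch] .
  then have "s \<in> TT" using s xy ch by (auto simp: TT_def)
  thus False using s by simp
qed

lemma indep:
  assumes t: "t \<in> TT" and A: "A \<in> F" "(t,1) \<in> A" and B: "B \<in> F" "(t,1) \<notin> B"
    and agree: "\<forall>u\<in>TT-{t}. ((u,1) \<in> A \<longleftrightarrow> (u,1) \<in> B)"
  shows False
proof -
  define CA where "CA = {X \<in> F. (t,1) \<in> X \<and> (\<forall>u\<in>TT-{t}. ((u,1) \<in> X \<longleftrightarrow> (u,1) \<in> A))}"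
  define CB where "CB = {Y \<in> F. (t,1) \<notin> Y \<and> (\<forall>u\<in>TT-{t}. ((u,1) \<in> Y \<longleftrightarrow> (u,1) \<in> A))}"
  have fCA: "finite CA" using Ffin by (simp add: CA_def)
  have fCB: "finite CB" using Ffin by (simp add: CB_def)
  have nA: "CA \<noteq> {}" using A unfolding CA_def by blast
  have nB: "CB \<noteq> {}" using B agree unfolding CB_def by blast
  show False
  proof (rule minpair[OF fCA fCB nA nB])
    show "\<And>X. X \<in> CA \<union> CB \<Longrightarrow> finite X" using Ffin1 by (auto simp: CA_def CB_def)
  next
    fix X Y assume X: "X \<in> CA" and Y: "Y \<in> CB"
    have XF: "X \<in> F" "(t,1) \<in> X" "\<forall>u\<in>TT-{t}. ((u,1) \<in> X \<longleftrightarrow> (u,1) \<in> A)" using X by (auto simp: CA_def)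
    have YF: "Y \<in> F" "(t,1) \<notin> Y" "\<forall>u\<in>TT-{t}. ((u,1) \<in> Y \<longleftrightarrow> (u,1) \<in> A)" using Y by (auto simp: CB_def)
    have Y2: "(t,2) \<in> Y" using TT_mem(1)[OF t YF(1)] YF(2) by simp
    define Y' where "Y' = insert (t,1) (Y - {(t,2)})"
    have "X \<noteq> Y'" using TT_deg[OF t YF(1) Y2] XF(1) unfolding Y'_def by blast
    have "\<exists>s. part X s \<noteq> part Y' s"
    proof (rule ccontr)
      assume "\<not> (\<exists>s. part X s \<noteq> part Y' s)"
      then have eqp: "\<And>s. part X s = part Y' s" by blast
      have "\<And>s x. (s,x) \<in> X \<longleftrightarrow> (s,x) \<in> Y'"
      proof -
        fix s x
        have "x \<in> part X s \<longleftrightarrow> x \<in> part Y' s" using eqp by simp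
        thus "(s,x) \<in> X \<longleftrightarrow> (s,x) \<in> Y'" by simp
      qed
      then have "X = Y'" by (simp add: set_eq_iff)
      thus False using \<open>X \<noteq> Y'\<close> by simp
    qed
    then obtain s where ps: "part X s \<noteq> part Y' s" by blast
    have pY': "part Y' s = (if s = t then insert 1 (part Y t - {2}) else part Y s)"
      by (auto simp: Y'_def)
    have st: "s \<noteq> t"
    proof
      assume "s = t"
      have "part X t = {1}" using TT_mem(3)[OF t XF(1) XF(2)] .
      moreover have "part Y t = {2}" using TT_mem(4)[OF t YF(1) YF(2)] .
      ultimately show False using ps pY' \<open>s = t\<close> by simp
    qed
    have psY: "part X s \<noteq> part Y s" using ps pY' st by simp
    have sT: "s \<notin> TT"
    proof
      assume sT: "s \<in> TT"
      have m1: "(s,1) \<in> X \<longleftrightarrow> (s,1) \<in> Y" using XF(3) YF(3) sT st by blast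
      have "part X s = part Y s"
      proof (cases "(s,1) \<in> X")
        case True thus ?thesis using TT_mem(3)[OF sT XF(1)] TT_mem(3)[OF sT YF(1)] m1 by simp
      next
        case False thus ?thesis using TT_mem(4)[OF sT XF(1)] TT_mem(4)[OF sT YF(1)] m1 by simp
      qed
      thus False using psY by simp
    qed
    have s: "s \<in> {1..p}"
    proof (rule ccontr)
      assume ns: "s \<notin> {1..p}"
      have "part X s = {}" using Fmem[OF XF(1)] ns by auto
      moreover have "part Y s = {}" using Fmem[OF YF(1)] ns by auto
      ultimately show False using psY by simp
    qed
    have "card (part X s) = card (part Y s)" using Fpart[OF XF(1) s] Fpart[OF YF(1) s] by simp
    moreover have "finite (part X s)" "finite (part Y s)"
      using part_fin[OF FpB[OF XF(1)]] part_fin[OF FpB[OF YF(1)]] .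
    ultimately obtain a b where ab: "a \<in> part X s - part Y s" "b \<in> part Y s - part X s"
      using diff_elems[OF _ _ _ psY] by blast
    have a1: "(s,a) \<in> X" "(s,a) \<notin> Y" using ab by simp_all
    have b1: "(s,b) \<in> Y" "(s,b) \<notin> X" using ab by simp_all
    have ra: "1 \<le> a" "a \<le> n s" using Fmem[OF XF(1) a1(1)] by simp_all
    have rb: "1 \<le> b" "b \<le> n s" using Fmem[OF YF(1) b1(1)] by simp_all
    have nT: "\<And>u c. u \<in> TT \<Longrightarrow> (u,c) \<noteq> (s,a) \<and> (u,c) \<noteq> (s,b)" using sT by auto
    have c1: "insert (s,b) (X - {(s,a)}) \<in> CA" if ba: "b < a"
    proof -
      have "shift_family s b a F = F" using fix_other[OF s sT rb(1) ba ra(2)] .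
      then have "shift_set s b a X \<in> F" using sf_fixed XF(1) by blast
      moreover have "shift_set s b a X = insert (s,b) (X - {(s,a)})" using a1(1) b1(2) by (simp add: shift_set_def)
      ultimately have "insert (s,b) (X - {(s,a)}) \<in> F" by simp
      moreover have "(t,1) \<in> insert (s,b) (X - {(s,a)})" using XF(2) st by simp
      moreover have "\<forall>u\<in>TT-{t}. ((u,1) \<in> insert (s,b) (X - {(s,a)}) \<longleftrightarrow> (u,1) \<in> A)"
        using XF(3) nT by auto
      ultimately show ?thesis by (simp add: CA_def)
    qed
    have c2: "insert (s,a) (Y - {(s,b)}) \<in> CB" if ab': "a < b"
    proof -
      have "shift_family s a b F = F" using fix_other[OF s sT ra(1) ab' rb(2)] .
      then have "shift_set s a b Y \<in> F" using sf_fixed YF(1) by blast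
      moreover have "shift_set s a b Y = insert (s,a) (Y - {(s,b)})" using b1(1) a1(2) by (simp add: shift_set_def)
      ultimately have "insert (s,a) (Y - {(s,b)}) \<in> F" by simp
      moreover have "(t,1) \<notin> insert (s,a) (Y - {(s,b)})" using YF(2) st by simp
      moreover have "\<forall>u\<in>TT-{t}. ((u,1) \<in> insert (s,a) (Y - {(s,b)}) \<longleftrightarrow> (u,1) \<in> A)"
        using YF(3) nT by auto
      ultimately show ?thesis by (simp add: CB_def)
    qed
    show "\<exists>s a b. (s,a) \<in> X \<and> (s,a) \<notin> Y \<and> (s,b) \<in> Y \<and> (s,b) \<notin> X \<and>
              (b < a \<longrightarrow> insert (s,b) (X - {(s,a)}) \<in> CA) \<and> (a < b \<longrightarrow> insert (s,a) (Y - {(s,b)}) \<in> CB)"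
      using a1 b1 c1 c2 by blast
  qed
qed

end


definition sw :: "nat \<Rightarrow> nat" where "sw x = (if x = 1 then 2 else if x = 2 then 1 else x)"
lemma sw_sw[simp]: "sw (sw x) = x" by (simp add: sw_def)
lemma sw_12[simp]: "sw 1 = 2" "sw 2 = 1" by (simp_all add: sw_def)
lemma sw_eq_iff: "sw x = y \<longleftrightarrow> x = sw y" by (metis sw_sw)
lemma sw_Suc0[simp]: "sw (Suc 0) = 2" by (simp add: sw_def)
lemma sw_img: "x \<in> sw ` S \<longleftrightarrow> sw x \<in> S" by (metis image_iff sw_sw)

context mf begin

definition phi :: "nat \<times> nat \<Rightarrow> nat \<times> nat" where
  "phi e = (fst e, if fst e \<in> TT then sw (snd e) else snd e)"
definition flip :: "(nat \<times> nat) set \<Rightarrow> (nat \<times> nat) set" where "flip A = phi ` A"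

lemma phi_phi[simp]: "phi (phi e) = e" by (simp add: phi_def)
lemma phi_inj: "inj phi" by (metis injI phi_phi)
lemma mem_flip: "e \<in> flip A \<longleftrightarrow> phi e \<in> A"
  unfolding flip_def by (metis image_iff phi_phi)
lemma flip_flip[simp]: "flip (flip A) = A" by (auto simp: mem_flip)
lemma flip_inj: "inj flip" by (metis injI flip_flip)
lemma phi_T: "u \<in> TT \<Longrightarrow> phi (u,x) = (u, sw x)" by (simp add: phi_def)
lemma phi_nT: "u \<notin> TT \<Longrightarrow> phi (u,x) = (u, x)" by (simp add: phi_def)

definition pat :: "(nat \<times> nat) set \<Rightarrow> nat set \<Rightarrow> bool" where
  "pat A Q \<longleftrightarrow> (\<forall>t\<in>TT. ((t,1) \<in> A \<longleftrightarrow> t \<in> Q))"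

lemma flip_part: "part (flip A) u = (if u \<in> TT then sw ` part A u else part A u)"
proof (cases "u \<in> TT")
  case True
  have "x \<in> part (flip A) u \<longleftrightarrow> x \<in> sw ` part A u" for x
    using True by (simp add: mem_flip phi_T sw_img)
  hence "part (flip A) u = sw ` part A u" by (simp add: set_eq_iff)
  thus ?thesis using True by simp
next
  case False thus ?thesis by (auto simp: mem_flip phi_nT)
qed

lemma flip_pB: assumes A: "A \<in> F" shows "flip A \<in> prodBinom p n k"
proof -
  have sub: "flip A \<subseteq> ground p n"
  proof
    fix e assume e: "e \<in> flip A"
    obtain u x where ux: "e = (u,x)" by (cases e)
    show "e \<in> ground p n"
    proof (cases "u \<in> TT")
      case True
      have "(u, sw x) \<in> A" using e ux True by (simp add: mem_flip phi_T)
      then have "sw x = 1 \<or> sw x = 2" using TT_mem(2)[OF True A] by blast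
      then have "x = 1 \<or> x = 2" by (metis sw_12 sw_sw)
      moreover have "u \<in> {1..p}" "2 \<le> n u" using TT_props[OF True] by auto
      ultimately show ?thesis using ux by (auto simp: ground_def)
    next
      case False
      have "(u, x) \<in> A" using e ux False by (simp add: mem_flip phi_nT)
      then show ?thesis using Fmem[OF A] ux by (simp add: ground_def)
    qed
  qed
  have "\<forall>s\<in>{1..p}. card (part (flip A) s) = k s"
  proof
    fix s assume s: "s \<in> {1..p}"
    show "card (part (flip A) s) = k s"
    proof (cases "s \<in> TT")
      case True
      have "card (sw ` part A s) = card (part A s)"
        by (rule card_image) (metis inj_onI sw_sw)
      thus ?thesis using True Fpart[OF A s] by (simp add: flip_part)
    next
      case False thus ?thesis using Fpart[OF A s] by (simp add: flip_part)
    qed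
  qed
  thus ?thesis using sub by (simp add: pB_iff)
qed

lemma flip_T1: "t \<in> TT \<Longrightarrow> A \<in> F \<Longrightarrow> (t,1) \<in> flip A \<longleftrightarrow> (t,1) \<notin> A"
  using TT_mem(1) by (simp add: mem_flip phi_T)

lemma flip_T2: "t \<in> TT \<Longrightarrow> (t,2) \<in> flip A \<longleftrightarrow> (t,1) \<in> A"
  by (simp add: mem_flip phi_T)

lemma pat_flip: "A \<in> F \<Longrightarrow> pat A Q \<Longrightarrow> pat (flip A) (TT - Q)"
  unfolding pat_def using flip_T1 by auto

lemma flip_int: "flip A \<inter> flip B = flip (A \<inter> B)"
  by (auto simp: mem_flip)

lemma flip_wt:
  assumes A: "A \<in> F" and pt: "pat A Q" and Q: "Q \<subseteq> TT"
  shows "wt (flip A) + card (TT - Q) = wt A + card Q"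
proof -
  define A1 where "A1 = {e \<in> A. fst e \<in> TT}"
  define A2 where "A2 = {e \<in> A. fst e \<notin> TT}"
  have fA: "finite A" using Ffin1[OF A] .
  have split: "A = A1 \<union> A2" "A1 \<inter> A2 = {}" by (auto simp: A1_def A2_def)
  have fA1: "finite A1" "finite A2" using fA by (auto simp: A1_def A2_def)
  have A1e: "A1 = (\<lambda>t. (t,1)) ` Q \<union> (\<lambda>t. (t,2)) ` (TT - Q)"
  proof (rule set_eqI)
    fix e :: "nat \<times> nat"
    obtain u x where ux: "e = (u,x)" by (cases e)
    show "e \<in> A1 \<longleftrightarrow> e \<in> (\<lambda>t. (t,1)) ` Q \<union> (\<lambda>t. (t,2)) ` (TT - Q)"
    proof (cases "u \<in> TT")
      case True
      have m: "(u,1) \<in> A \<longleftrightarrow> u \<in> Q" using pt True by (simp add: pat_def)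
      have b: "(u,2) \<in> A \<longleftrightarrow> (u,1) \<notin> A" "(u,x) \<in> A \<Longrightarrow> x = 1 \<or> x = 2" using TT_mem[OF True A] by blast+
      show ?thesis using ux True m b Q by (auto simp: A1_def)
    next
      case False thus ?thesis using ux Q by (auto simp: A1_def)
    qed
  qed
  have d: "(\<lambda>t. (t,1::nat)) ` Q \<inter> (\<lambda>t. (t,2)) ` (TT - Q) = {}" by auto
  have fO: "finite Q" "finite (TT - Q)" using TT_fin finite_subset[OF Q] by auto
  have r1: "(\<Sum>e\<in>(\<lambda>t. (t,1::nat)) ` Q. g e) = (\<Sum>t\<in>Q. g (t,1))" for g :: "nat \<times> nat \<Rightarrow> nat"
    by (rule sum.reindex_cong[where l="\<lambda>t. (t,1)"]) (auto intro: inj_onI)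
  have r2: "(\<Sum>e\<in>(\<lambda>t. (t,2::nat)) ` (TT - Q). g e) = (\<Sum>t\<in>TT - Q. g (t,2))" for g :: "nat \<times> nat \<Rightarrow> nat"
    by (rule sum.reindex_cong[where l="\<lambda>t. (t,2)"]) (auto intro: inj_onI)
  have s1: "(\<Sum>e\<in>A1. g e) = (\<Sum>t\<in>Q. g (t,1)) + (\<Sum>t\<in>TT - Q. g (t,2))" for g :: "nat \<times> nat \<Rightarrow> nat"
    unfolding A1e using sum.union_disjoint[OF _ _ d, of g] fO r1[of g] r2[of g] by simp
  have "wt (flip A) = (\<Sum>e\<in>A. snd (phi e))"
    unfolding wt_def flip_def by (simp add: sum.reindex[OF inj_on_subset[OF phi_inj]])
  also have "\<dots> = (\<Sum>e\<in>A1. snd (phi e)) + (\<Sum>e\<in>A2. snd (phi e))"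
    using split fA1 by (metis sum.union_disjoint)
  also have "(\<Sum>e\<in>A2. snd (phi e)) = (\<Sum>e\<in>A2. snd e)"
    by (rule sum.cong) (auto simp: A2_def phi_def)
  also have "(\<Sum>e\<in>A1. snd (phi e)) = (\<Sum>t\<in>Q. 2) + (\<Sum>t\<in>TT - Q. 1)"
  proof -
    have "(\<Sum>t\<in>Q. snd (phi (t,1))) = (\<Sum>t\<in>Q. 2)" by (rule sum.cong) (use Q in \<open>auto simp: phi_T\<close>)
    moreover have "(\<Sum>t\<in>TT - Q. snd (phi (t,2))) = (\<Sum>t\<in>TT - Q. 1)" by (rule sum.cong) (auto simp: phi_T)
    ultimately show ?thesis using s1[of "\<lambda>e. snd (phi e)"] by simp
  qed
  finally have w1: "wt (flip A) = 2 * card Q + card (TT - Q) + (\<Sum>e\<in>A2. snd e)" by simp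
  have "wt A = (\<Sum>e\<in>A1. snd e) + (\<Sum>e\<in>A2. snd e)"
    unfolding wt_def using split fA1 by (metis sum.union_disjoint)
  also have "(\<Sum>e\<in>A1. snd e) = card Q + 2 * card (TT - Q)"
    using s1[of snd] by simp
  finally have w2: "wt A = card Q + 2 * card (TT - Q) + (\<Sum>e\<in>A2. snd e)" .
  show ?thesis using w1 w2 by simp
qed

end

context mf begin

lemma flip_op:
  assumes Q: "Q \<subseteq> TT" "card Q < card (TT - Q)"
    and Hd: "H = {A \<in> F. pat A Q \<and> flip A \<notin> F}" and ne: "H \<noteq> {}"
  shows "\<exists>e\<in>ground p n. \<forall>X\<in>(F - H) \<union> flip ` H. e \<in> X"
proof (rule better)
  have HF: "H \<subseteq> F" using Hd by blast
  have inj: "inj_on flip H" using flip_inj inj_on_subset by blast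
  have d: "flip ` H \<inter> F = {}" using Hd by blast
  show "(F - H) \<union> flip ` H \<subseteq> prodBinom p n k" using Fsub flip_pB HF by blast
  show "card ((F - H) \<union> flip ` H) = card F" using repl[OF Ffin HF inj d] .
  have lt: "\<forall>A\<in>H. wt (flip A) < wt A"
  proof
    fix A assume A: "A \<in> H"
    have "wt (flip A) + card (TT - Q) = wt A + card Q" using flip_wt[of A Q] A Hd Q(1) by blast
    thus "wt (flip A) < wt A" using Q(2) by simp
  qed
  show "Wt ((F - H) \<union> flip ` H) < Wt F" using repl_wt[OF Ffin HF inj d lt ne] .
  show "intersecting ((F - H) \<union> flip ` H)"
    unfolding intersecting_def
  proof (intro ballI)
    have key: "flip A \<inter> Y \<noteq> {}" if A: "A \<in> H" and Y: "Y \<in> F - H" for A Y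
    proof
      assume e: "flip A \<inter> Y = {}"
      have AF: "A \<in> F" "pat A Q" using A Hd by auto
      have YF: "Y \<in> F" "Y \<notin> H" using Y by auto
      have "pat Y Q" unfolding pat_def
      proof
        fix t assume t: "t \<in> TT"
        have fA: "(t,1) \<in> flip A \<longleftrightarrow> t \<notin> Q" using flip_T1[OF t AF(1)] AF(2) t by (simp add: pat_def)
        have fA2: "(t,2) \<in> flip A \<longleftrightarrow> t \<in> Q" using flip_T2[OF t] AF(2) t by (simp add: pat_def)
        have "(t,2) \<in> Y \<longleftrightarrow> (t,1) \<notin> Y" using TT_mem(1)[OF t YF(1)] .
        then show "(t,1) \<in> Y \<longleftrightarrow> t \<in> Q" using e fA fA2 by blast
      qed
      then have "flip Y \<in> F" using YF Hd by blast
      then have "A \<inter> flip Y \<noteq> {}" using Fmeet AF(1) by blast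
      moreover have "A \<inter> flip Y = flip (flip A \<inter> Y)" using flip_int[of "flip A" Y] by simp
      ultimately show False using e by (simp add: flip_def)
    qed
    fix X Y assume X: "X \<in> (F - H) \<union> flip ` H" and Y: "Y \<in> (F - H) \<union> flip ` H"
    show "X \<inter> Y \<noteq> {}"
      using X Y
    proof (elim UnE)
      assume "X \<in> F - H" "Y \<in> F - H" thus ?thesis using Fmeet by blast
    next
      assume "X \<in> F - H" "Y \<in> flip ` H" thus ?thesis using key by (auto simp: Int_commute)
    next
      assume "X \<in> flip ` H" "Y \<in> F - H" thus ?thesis using key by auto
    next
      assume "X \<in> flip ` H" "Y \<in> flip ` H"
      then obtain A B where AB: "A \<in> H" "B \<in> H" "X = flip A" "Y = flip B" by blast
      have "A \<inter> B \<noteq> {}" using AB HF Fmeet by blast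
      thus ?thesis using AB flip_int[of A B] by (simp add: flip_def)
    qed
  qed
qed

lemma mkpat:
  assumes Q: "Q \<subseteq> TT"
  shows "\<exists>X\<in>prodBinom p n k. \<forall>t\<in>TT. part X t = (if t \<in> Q then {1} else {2})"
proof -
  define I where "I = (\<lambda>s. if s \<in> TT then (if s \<in> Q then {1} else {2::nat}) else {})"
  define E where "E = (\<lambda>s. if s \<in> TT then (if s \<in> Q then {1} else {2::nat}) else {1..n s})"
  have "\<forall>s\<in>{1..p}. I s \<subseteq> E s \<and> E s \<subseteq> {1..n s} \<and> card (I s) \<le> k s \<and> k s \<le> card (E s)"
  proof
    fix s assume s: "s \<in> {1..p}"
    show "I s \<subseteq> E s \<and> E s \<subseteq> {1..n s} \<and> card (I s) \<le> k s \<and> k s \<le> card (E s)"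
    proof (cases "s \<in> TT")
      case True
      then have "k s = 1" "2 \<le> n s" using TT_props[OF True] by auto
      thus ?thesis using True by (auto simp: I_def E_def)
    next
      case False
      thus ?thesis using kn1[OF s] by (auto simp: I_def E_def)
    qed
  qed
  from exX[OF this] obtain X where X: "X \<in> prodBinom p n k" "\<forall>s\<in>{1..p}. I s \<subseteq> part X s \<and> part X s \<subseteq> E s" by blast
  have "\<forall>t\<in>TT. part X t = (if t \<in> Q then {1} else {2})"
  proof
    fix t assume t: "t \<in> TT"
    have "I t \<subseteq> part X t" "part X t \<subseteq> E t" using X(2) TT_sub t by blast+
    thus "part X t = (if t \<in> Q then {1} else {2})" using t by (auto simp: I_def E_def)
  qed
  thus ?thesis using X(1) by blast
qed

lemma pat_nonempty:
  assumes Q: "Q \<subseteq> TT" and no: "\<not> (\<exists>Y\<in>F. pat Y (TT - Q))"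
  shows "\<exists>X\<in>F. pat X Q"
proof -
  obtain X where X: "X \<in> prodBinom p n k" "\<forall>t\<in>TT. part X t = (if t \<in> Q then {1} else {2})"
    using mkpat[OF Q] by blast
  have m: "\<And>t. t \<in> TT \<Longrightarrow> ((t,1) \<in> X \<longleftrightarrow> t \<in> Q) \<and> ((t,2) \<in> X \<longleftrightarrow> t \<notin> Q)"
  proof -
    fix t assume t: "t \<in> TT"
    have "1 \<in> part X t \<longleftrightarrow> t \<in> Q" "2 \<in> part X t \<longleftrightarrow> t \<notin> Q" using X(2) t by auto
    thus "((t,1) \<in> X \<longleftrightarrow> t \<in> Q) \<and> ((t,2) \<in> X \<longleftrightarrow> t \<notin> Q)" by simp
  qed
  have "X \<in> F"
  proof (rule full[OF X(1)], rule ballI)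
    fix A assume A: "A \<in> F"
    have "\<not> pat A (TT - Q)" using no A by blast
    then obtain t where t: "t \<in> TT" "\<not> ((t,1) \<in> A \<longleftrightarrow> t \<in> TT - Q)" by (auto simp: pat_def)
    then have tt: "(t,1) \<in> A \<longleftrightarrow> t \<in> Q" by blast
    have "(t,2) \<in> A \<longleftrightarrow> (t,1) \<notin> A" using TT_mem(1)[OF t(1) A] .
    then show "X \<inter> A \<noteq> {}" using m[OF t(1)] tt by blast
  qed
  moreover have "pat X Q" using m by (simp add: pat_def)
  ultimately show ?thesis by blast
qed

end

context mf begin

lemma indep2:
  assumes t: "t \<in> TT" and A: "A \<in> F" and B: "B \<in> F" and d: "(t,1) \<in> A \<longleftrightarrow> (t,1) \<notin> B"
    and agree: "\<forall>u\<in>TT-{t}. ((u,1) \<in> A \<longleftrightarrow> (u,1) \<in> B)"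
  shows False
proof (cases "(t,1) \<in> A")
  case True thus False using indep[OF t A True B] d agree by blast
next
  case False
  have "(t,1) \<in> B" using d False by blast
  moreover have "\<forall>u\<in>TT-{t}. ((u,1) \<in> B \<longleftrightarrow> (u,1) \<in> A)" using agree by blast
  ultimately show False using indep[OF t B _ A False] by blast
qed

lemma exH:
  assumes c2: "2 \<le> card TT"
  shows "\<exists>Q. Q \<subseteq> TT \<and> card Q < card (TT - Q) \<and> {A \<in> F. pat A Q \<and> flip A \<notin> F} \<noteq> {}"
proof (rule ccontr)
  assume "\<not> ?thesis"
  then have NH: "\<And>Q A. Q \<subseteq> TT \<Longrightarrow> card Q < card (TT - Q) \<Longrightarrow> A \<in> F \<Longrightarrow> pat A Q \<Longrightarrow> flip A \<in> F" by blast
  have TTne: "TT \<noteq> {}" using c2 by auto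
  have "\<exists>A1\<in>F. pat A1 TT"
  proof (cases "\<exists>Y\<in>F. pat Y {}")
    case True
    then obtain Y where Y: "Y \<in> F" "pat Y {}" by blast
    have "card ({}::nat set) < card (TT - {})" using TTne TT_fin by (simp add: card_gt_0_iff)
    then have "flip Y \<in> F" using NH[of "{}" Y] Y by simp
    moreover have "pat (flip Y) TT" using pat_flip[OF Y] by simp
    ultimately show ?thesis by blast
  next
    case False thus ?thesis using pat_nonempty[of TT] by simp
  qed
  then obtain A1 where A1: "A1 \<in> F" "pat A1 TT" by blast
  obtain t where t: "t \<in> TT" using TTne by blast
  have no2: "\<not> (\<exists>Y\<in>F. pat Y (TT - {t}))"
  proof
    assume "\<exists>Y\<in>F. pat Y (TT - {t})"
    then obtain Y where Y: "Y \<in> F" "pat Y (TT - {t})" by blast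
    have "(t,1) \<in> A1" "(t,1) \<notin> Y" using A1(2) Y(2) t by (auto simp: pat_def)
    moreover have "\<forall>u\<in>TT-{t}. ((u,1) \<in> A1 \<longleftrightarrow> (u,1) \<in> Y)" using A1(2) Y(2) by (auto simp: pat_def)
    ultimately show False using indep[OF t A1(1) _ Y(1)] by blast
  qed
  have "\<exists>X2\<in>F. pat X2 {t}"
    using pat_nonempty[of "{t}"] t no2 by simp
  then obtain X2 where X2: "X2 \<in> F" "pat X2 {t}" by blast
  show False
  proof (cases "card TT = 2")
    case False
    then have c3: "3 \<le> card TT" using c2 by simp
    have "card (TT - {t}) = card TT - 1" using t TT_fin by (simp add: card_Diff_singleton)
    then have "card {t} < card (TT - {t})" using c3 by simp
    then have "flip X2 \<in> F" using NH[of "{t}" X2] X2 t by simp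
    moreover have "pat (flip X2) (TT - {t})" using pat_flip[OF X2] .
    ultimately show False using no2 by blast
  next
    case True
    then obtain a b where ab: "TT = {a,b}" "a \<noteq> b" by (metis card_2_iff)
    obtain u where u: "u \<in> TT" "u \<noteq> t" using ab by blast
    have TTu: "TT - {u} = {t}" using ab u t by auto
    have "(u,1) \<in> A1" "(u,1) \<notin> X2" using A1(2) X2(2) u by (auto simp: pat_def)
    moreover have "\<forall>w\<in>TT-{u}. ((w,1) \<in> A1 \<longleftrightarrow> (w,1) \<in> X2)" using TTu A1(2) X2(2) t by (auto simp: pat_def)
    ultimately show False using indep[OF u(1) A1(1) _ X2(1)] by blast
  qed
qed

lemma nontriv_contra:
  assumes c2: "2 \<le> card TT" and Q: "Q \<subseteq> TT" "card Q < card (TT - Q)"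
    and Hd: "H = {A \<in> F. pat A Q \<and> flip A \<notin> F}" and ne: "H \<noteq> {}"
  shows False
proof -
  obtain e where e: "e \<in> ground p n" "\<forall>X\<in>(F - H) \<union> flip ` H. e \<in> X" using flip_op[OF Q Hd ne] by blast
  obtain A where A: "A \<in> H" using ne by blast
  have AF: "A \<in> F" "pat A Q" "flip A \<notin> F" using A Hd by auto
  have eA: "e \<in> flip A" using e A by blast
  obtain u c where uc: "e = (u,c)" by (cases e)
  show False
  proof (cases "u \<in> TT")
    case False
    have "e \<in> A" using eA uc False by (simp add: mem_flip phi_nT)
    obtain Y where Y: "Y \<in> F" "e \<notin> Y" using Favoid[OF e(1)] by blast
    show False
    proof (cases "Y \<in> H")
      case True
      then have "e \<in> flip Y" using e by blast
      then have "e \<in> Y" using uc False by (simp add: mem_flip phi_nT)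
      thus False using Y by simp
    next
      case False
      then have "e \<in> Y" using e Y by blast
      thus False using Y by simp
    qed
  next
    case True
    have e'A: "(u, sw c) \<in> A" using eA uc True by (simp add: mem_flip phi_T)
    have c12: "sw c = 1 \<or> sw c = 2" using TT_mem(2)[OF True AF(1) e'A] .
    have Z: "Y \<in> H" if Y: "Y \<in> F" "(u, sw c) \<in> Y" for Y
    proof (rule ccontr)
      assume "Y \<notin> H"
      then have uY: "(u,c) \<in> Y" using e Y uc by blast
      have "c = 1 \<or> c = 2" using TT_mem(2)[OF True Y(1) uY] .
      then show False using uY using Y c12 TT_mem(1)[OF True Y(1)] by (auto simp: sw_def split: if_splits)
    qed
    obtain v where v: "v \<in> TT" "v \<noteq> u"
    proof -
      have "TT - {u} \<noteq> {}"
      proof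
        assume "TT - {u} = {}"
        then have "TT \<subseteq> {u}" by blast
        then have "card TT \<le> card {u}" by (intro card_mono) simp_all
        then have "card TT \<le> 1" by simp
        thus False using c2 by simp
      qed
      thus ?thesis using that by blast
    qed
    define Q2 where "Q2 = {w \<in> TT. (w \<in> Q \<longleftrightarrow> w = u)}"
    have q2: "\<And>w. w \<in> TT \<Longrightarrow> w \<in> Q2 \<longleftrightarrow> (w \<in> Q \<longleftrightarrow> w = u)" by (simp add: Q2_def)
    have pA: "\<And>w. w \<in> TT \<Longrightarrow> (w,1) \<in> A \<longleftrightarrow> w \<in> Q" using AF(2) by (simp add: pat_def)
    have no: "\<not> (\<exists>Y\<in>F. pat Y Q2)"
    proof
      assume "\<exists>Y\<in>F. pat Y Q2"
      then obtain Y where Y: "Y \<in> F" "pat Y Q2" by blast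
      have pY: "\<And>w. w \<in> TT \<Longrightarrow> (w,1) \<in> Y \<longleftrightarrow> w \<in> Q2" using Y(2) by (simp add: pat_def)
      have uu: "(u,1) \<in> Y \<longleftrightarrow> (u,1) \<in> A" using pY[OF True] pA[OF True] q2[OF True] by blast
      have "(u, sw c) \<in> Y"
      proof (cases "sw c = 1")
        case True2: True
        then show ?thesis using uu e'A by simp
      next
        case False2: False
        then have s2: "sw c = 2" using c12 by simp
        then have "(u,1) \<notin> A" using e'A TT_mem(1)[OF True AF(1)] by simp
        then have "(u,1) \<notin> Y" using uu by simp
        then show ?thesis using s2 TT_mem(1)[OF True Y(1)] by simp
      qed
      then have "Y \<in> H" using Z Y(1) by blast
      then have "pat Y Q" using Hd by blast
      then have "(v,1) \<in> Y \<longleftrightarrow> v \<in> Q" using v(1) by (simp add: pat_def)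
      moreover have "(v,1) \<in> Y \<longleftrightarrow> v \<in> Q2" using pY[OF v(1)] .
      moreover have "v \<in> Q2 \<longleftrightarrow> v \<notin> Q" using q2[OF v(1)] v(2) by blast
      ultimately show False by blast
    qed
    have Q3: "TT - Q2 \<subseteq> TT" by blast
    have Q2s: "Q2 \<subseteq> TT" by (auto simp: Q2_def)
    have "TT - (TT - Q2) = Q2" using Q2s by blast
    then have no': "\<not> (\<exists>Y\<in>F. pat Y (TT - (TT - Q2)))" using no by simp
    obtain X where X: "X \<in> F" "pat X (TT - Q2)" using pat_nonempty[OF Q3 no'] by blast
    have pX: "\<And>w. w \<in> TT \<Longrightarrow> (w,1) \<in> X \<longleftrightarrow> w \<notin> Q2" using X(2) by (simp add: pat_def)
    have d: "(u,1) \<in> A \<longleftrightarrow> (u,1) \<notin> X" using pX[OF True] pA[OF True] q2[OF True] by blast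
    have ag: "\<forall>w\<in>TT-{u}. ((w,1) \<in> A \<longleftrightarrow> (w,1) \<in> X)"
    proof
      fix w assume w: "w \<in> TT - {u}"
      then have "w \<in> TT" "w \<noteq> u" by auto
      thus "(w,1) \<in> A \<longleftrightarrow> (w,1) \<in> X" using pX pA q2 by blast
    qed
    show False using indep2[OF True AF(1) X(1) d ag] .
  qed
qed

lemma TT_empty: "TT = {}"
proof (rule ccontr)
  assume ne: "TT \<noteq> {}"
  show False
  proof (cases "card TT = 1")
    case True
    then obtain t where t: "TT = {t}" by (metis card_1_singletonE)
    have tT: "t \<in> TT" using t by simp
    obtain B where B: "B \<in> F" "(t,2) \<in> B" "(t,1) \<notin> B" using exmoved[OF TT_props(3)[OF tT]] by auto
    have g: "(t,2) \<in> ground p n" using TT_props(1,2)[OF tT] by (simp add: ground_def)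
    obtain A where A: "A \<in> F" "(t,2) \<notin> A" using Favoid[OF g] by blast
    have "(t,1) \<in> A" using TT_mem(1)[OF tT A(1)] A(2) by simp
    moreover have "\<forall>u\<in>TT-{t}. ((u,1) \<in> A \<longleftrightarrow> (u,1) \<in> B)" using t by simp
    ultimately show False using indep[OF tT A(1) _ B(1) B(3)] by blast
  next
    case False
    have "0 < card TT" using ne TT_fin by (simp add: card_gt_0_iff)
    then have "2 \<le> card TT" using False by linarith
    then obtain Q where Q: "Q \<subseteq> TT" "card Q < card (TT - Q)" "{A \<in> F. pat A Q \<and> flip A \<notin> F} \<noteq> {}"
      using exH by blast
    show False using nontriv_contra[OF \<open>2 \<le> card TT\<close> Q(1,2) refl Q(3)] .
  qed
qed

lemma F_shifted: "shifted p n F"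
  unfolding shifted_def t_shifted_def
proof (intro ballI allI impI)
  fix t i j assume t: "t \<in> {1..p}" and ij: "1 \<le> i \<and> i < j \<and> j \<le> n t"
  show "shift_family t i j F = F"
  proof (rule ccontr)
    assume ch: "shift_family t i j F \<noteq> F"
    have "i = 1 \<and> j = 2" using ij12[OF t _ _ _ ch] ij by blast
    then have "t \<in> TT" using t ij ch by (auto simp: TT_def)
    thus False using TT_empty by simp
  qed
qed

end


theorem theorem2p1:
  fixes p :: nat and n k :: "nat \<Rightarrow> nat"
  assumes "p \<ge> 1"
    and "\<forall>s\<in>{1..p}. n s \<ge> 1"
    and "\<forall>s\<in>{1..p}. k s \<in> {1..n s}"
    and "\<exists>\<F>. \<F> \<subseteq> prodBinom p n k \<and> nontrivially_intersecting p n \<F>"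
  shows "\<exists>\<F>'. \<F>' \<subseteq> prodBinom p n k \<and> nontrivially_intersecting p n \<F>'
              \<and> (\<forall>\<G>. \<G> \<subseteq> prodBinom p n k \<and> nontrivially_intersecting p n \<G> \<longrightarrow> card \<G> \<le> card \<F>')
              \<and> shifted p n \<F>'"
proof -
  define C where "C = {G. G \<subseteq> prodBinom p n k \<and> nontrivially_intersecting p n G}"
  have fC: "finite C"
    by (rule finite_subset[of _ "Pow (prodBinom p n k)"]) (auto simp: C_def prodBinom_finite)
  have neC: "C \<noteq> {}" using assms(4) by (auto simp: C_def)
  define m where "m = Max (card ` C)"
  define M where "M = {G \<in> C. card G = m}"
  have "m \<in> card ` C" unfolding m_def using fC neC by simp
  then have neM: "M \<noteq> {}" by (auto simp: M_def)
  have fM: "finite M" using fC by (simp add: M_def)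
  have "Min (Wt ` M) \<in> Wt ` M" using fM neM by simp
  then obtain F where F: "F \<in> M" "Wt F = Min (Wt ` M)" by auto
  have Fmin: "\<forall>G\<in>M. Wt F \<le> Wt G" using F fM by simp
  have FC: "F \<in> C" "card F = m" using F(1) by (auto simp: M_def)
  have maxC: "\<And>G. G \<in> C \<Longrightarrow> card G \<le> m" unfolding m_def using fC by simp
  interpret mf p n k F
  proof
    show "1 \<le> p" using assms(1) .
    show "\<forall>s\<in>{1..p}. k s \<in> {1..n s}" using assms(3) .
    show "F \<subseteq> prodBinom p n k" "nontrivially_intersecting p n F" using FC(1) by (auto simp: C_def)
    show "\<And>G. G \<subseteq> prodBinom p n k \<Longrightarrow> nontrivially_intersecting p n G \<Longrightarrow> card G \<le> card F"
      using maxC FC(2) by (auto simp: C_def)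
    show "\<And>G. G \<subseteq> prodBinom p n k \<Longrightarrow> nontrivially_intersecting p n G \<Longrightarrow> card G = card F \<Longrightarrow> Wt F \<le> Wt G"
      using Fmin FC(2) by (auto simp: C_def M_def)
  qed
  show ?thesis using Fsub Fnt Fmax F_shifted by blast
qed

end
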